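(* In $D^{2,2,2}$, for every permutation $\{i,j,k\}$ of $\{1,2,3\}$: 1. $a^{ij}_0\supseteq a^{ij}_1\supseteq\cdots\supseteq a^{ij}_n\supseteq\cdots$, and $a^{ij}_n\supseteq x_i+x_j$ for all $n\ge0$; 2. $A^{ij}_0\supseteq A^{ij}_1\supseteq\cdots\supseteq A^{ij}_n\supseteq\cdots$; 3. $x_kA^{ij}_n=x_ka^{ji}_n$ for all $n\ge0$; 4. $A^{ij}_n=y_i+x_ja^{ik}_{n-1}$ for all $n\ge1$; 5. $y_iy_jA^{ki}_n=y_iy_ja^{ik}_n$ for all $n\ge0$; 6. $y_ia^{ij}_{n+1}=y_i(x_i+y_jA^{kj}_n)$ for all $n\ge0$.
   Context: $D^{2,2,2}$ is the modular lattice generated by $x_1,y_1,x_2,y_2,x_3,y_3$ subject only to $x_i\subseteq y_i$ ($i=1,2,3$), with a greatest element $I$ adjoined. Meet is written $ab$, join $a+b$, order $\subseteq$. Atomic elements: for distinct $i,j$, let $k$ denote the third index. Define - $a^{ij}_0=I$ and $a^{ij}_n=x_i+y_ja^{jk}_{n-1}$ for $n\ge1$; - $A^{ij}_0=I$ and $A^{ij}_n=y_i+x_jA^{ki}_{n-1}$ for $n\ge1$. *)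

theory Defs
  imports Main
begin

text \<open>Indices range over {1,2,3}; for distinct i j in {1,2,3}, third i j is the remaining index.\<close>
definition third :: "nat \<Rightarrow> nat \<Rightarrow> nat" where
  "third i j = 6 - i - j"

fun aa :: "(nat \<Rightarrow> 'a::bounded_lattice_top) \<Rightarrow> (nat \<Rightarrow> 'a) \<Rightarrow> nat \<Rightarrow> nat \<Rightarrow> nat \<Rightarrow> 'a" where
  "aa x y i j 0 = top"
| "aa x y i j (Suc n) = sup (x i) (inf (y j) (aa x y j (third i j) n))"

fun AA :: "(nat \<Rightarrow> 'a::bounded_lattice_top) \<Rightarrow> (nat \<Rightarrow> 'a) \<Rightarrow> nat \<Rightarrow> nat \<Rightarrow> nat \<Rightarrow> 'a" where
  "AA x y i j 0 = top"
| "AA x y i j (Suc n) = sup (y i) (inf (x j) (AA x y (third i j) i n))"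

end

theory Submission
  imports Defs
begin

definition okp :: "nat \<Rightarrow> nat \<Rightarrow> bool" where
  "okp i j = (i \<in> {1,2,3} \<and> j \<in> {1,2,3} \<and> i \<noteq> j)"

lemma third_props:
  assumes "okp i j"
  shows "okp i (third i j)" "okp j (third i j)" "okp (third i j) i" "okp (third i j) j"
    "third j i = third i j" "third i (third i j) = j" "third (third i j) i = j"
    "third j (third i j) = i" "third (third i j) j = i" "third i j \<in> {1,2,3}"
  using assms by (auto simp: okp_def third_def)

context
  fixes x y :: "nat \<Rightarrow> 'a::bounded_lattice_top"
  assumes modular: "\<And>a b c :: 'a. a \<le> c \<Longrightarrow> sup a (inf b c) = inf (sup a b) c"
    and xy: "\<And>l. l \<in> {1,2,3} \<Longrightarrow> x l \<le> y l"
begin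

lemma L:
  fixes z c p q :: 'a
  assumes "z \<le> c"
  shows "inf z (sup p (inf q c)) = inf z (sup q (inf p c))"
proof -
  have e1: "inf c (sup p (inf q c)) = sup (inf q c) (inf p c)"
  proof -
    have "inf q c \<le> c" by simp
    from modular[OF this, of p] show ?thesis by (metis inf_commute sup_commute)
  qed
  have e2: "inf c (sup q (inf p c)) = sup (inf p c) (inf q c)"
  proof -
    have "inf p c \<le> c" by simp
    from modular[OF this, of q] show ?thesis by (metis inf_commute sup_commute)
  qed
  have "inf z (sup p (inf q c)) = inf z (inf c (sup p (inf q c)))"
    using assms by (metis inf.absorb1 inf.assoc)
  also have "\<dots> = inf z (inf c (sup q (inf p c)))" using e1 e2 by (simp add: sup_commute)
  also have "\<dots> = inf z (sup q (inf p c))"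
    using assms by (metis inf.absorb1 inf.assoc)
  finally show ?thesis .
qed

lemma xle: "okp i j \<Longrightarrow> x i \<le> y i" "okp i j \<Longrightarrow> x j \<le> y j"
  using xy by (auto simp: okp_def)

lemma P1b: "okp i j \<Longrightarrow> sup (x i) (x j) \<le> aa x y i j n"
proof (induction n arbitrary: i j)
  case 0 then show ?case by simp
next
  case (Suc n)
  have "sup (x j) (x (third i j)) \<le> aa x y j (third i j) n"
    using Suc.IH third_props(2)[OF Suc.prems] by blast
  then have "x j \<le> inf (y j) (aa x y j (third i j) n)"
    using xle[OF Suc.prems] by simp
  then show ?case by (simp add: le_supI2)
qed

lemma P1a: "okp i j \<Longrightarrow> aa x y i j (Suc n) \<le> aa x y i j n"
proof (induction n arbitrary: i j)
  case 0 then show ?case by simp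
next
  case (Suc n)
  have "aa x y j (third i j) (Suc n) \<le> aa x y j (third i j) n"
    using Suc.IH third_props(2)[OF Suc.prems] by blast
  then show ?case by (simp add: inf.coboundedI2 le_supI2 inf_mono sup_mono)
qed

lemma P2: "okp i j \<Longrightarrow> AA x y i j (Suc n) \<le> AA x y i j n"
proof (induction n arbitrary: i j)
  case 0 then show ?case by simp
next
  case (Suc n)
  let ?k = "third i j"
  have h: "AA x y ?k i (Suc n) \<le> AA x y ?k i n"
    using Suc.IH third_props(3)[OF Suc.prems] by blast
  have e1: "AA x y i j (Suc (Suc n)) = sup (y i) (inf (x j) (AA x y ?k i (Suc n)))" by simp
  have e2: "AA x y i j (Suc n) = sup (y i) (inf (x j) (AA x y ?k i n))" by simp
  have "sup (y i) (inf (x j) (AA x y ?k i (Suc n))) \<le> sup (y i) (inf (x j) (AA x y ?k i n))"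
    using h by (intro sup_mono inf_mono order_refl)
  then show ?case using e1 e2 by simp
qed

lemma yAA: "y j \<le> AA x y j k n"
  by (cases n) auto

lemma P4: "okp i j \<Longrightarrow> AA x y i j (Suc n) = sup (y i) (inf (x j) (aa x y i (third i j) n))"
proof (induction n arbitrary: i j)
  case 0 then show ?case by simp
next
  case (Suc n)
  let ?k = "third i j"
  have ki: "okp ?k i" using third_props(3)[OF Suc.prems] .
  have IH: "AA x y ?k i (Suc n) = sup (y ?k) (inf (x i) (aa x y ?k j n))"
    using Suc.IH[OF ki] third_props(7)[OF Suc.prems] by simp
  have c: "x j \<le> aa x y ?k j n"
    using P1b[OF third_props(4)[OF Suc.prems]] by simp
  have "AA x y i j (Suc (Suc n)) = sup (y i) (inf (x j) (AA x y ?k i (Suc n)))" by simp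
  also have "\<dots> = sup (y i) (inf (x j) (sup (y ?k) (inf (x i) (aa x y ?k j n))))" using IH by simp
  also have "\<dots> = sup (y i) (inf (x j) (sup (x i) (inf (y ?k) (aa x y ?k j n))))"
    using L[OF c, of "y ?k" "x i"] by simp
  also have "\<dots> = sup (y i) (inf (x j) (aa x y i ?k (Suc n)))"
    using third_props(6)[OF Suc.prems] by simp
  finally show ?case .
qed

lemma P3: "okp i j \<Longrightarrow> inf (x (third i j)) (AA x y i j n) = inf (x (third i j)) (aa x y j i n)"
proof (cases n)
  case 0 then show ?thesis by simp
next
  case (Suc m)
  assume ij: "okp i j"
  let ?k = "third i j"
  have c: "x ?k \<le> aa x y i ?k m"
    using P1b[OF third_props(1)[OF ij]] by simp
  have "inf (x ?k) (AA x y i j n) = inf (x ?k) (sup (y i) (inf (x j) (aa x y i ?k m)))"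
    using P4[OF ij] Suc by simp
  also have "\<dots> = inf (x ?k) (sup (x j) (inf (y i) (aa x y i ?k m)))"
    using L[OF c] by simp
  also have "\<dots> = inf (x ?k) (aa x y j i n)"
    using Suc third_props(5)[OF ij] by simp
  finally show ?thesis .
qed

lemma P5: "okp i j \<Longrightarrow> inf (inf (y i) (y j)) (AA x y (third i j) i n)
   = inf (inf (y i) (y j)) (aa x y i (third i j) n)"
proof (induction n arbitrary: i j)
  case 0 then show ?case by simp
next
  case (Suc n)
  let ?k = "third i j"
  have ki: "okp ?k i" using third_props(3)[OF Suc.prems] .
  have IH: "inf (inf (y ?k) (y i)) (AA x y j ?k n) = inf (inf (y ?k) (y i)) (aa x y ?k j n)"
    using Suc.IH[OF ki] third_props(7)[OF Suc.prems] by simp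
  have z: "inf (y i) (y j) \<le> AA x y j ?k n" using yAA[of j ?k n] by (simp add: le_infI2)
  have xi: "x i \<le> y i" using xle[OF Suc.prems] by simp
  have m1: "\<And>w. inf (y i) (sup (x i) w) = sup (x i) (inf (y i) w)"
    using modular[OF xi] by (simp add: inf_commute)
  have "inf (inf (y i) (y j)) (AA x y ?k i (Suc n))
      = inf (inf (y i) (y j)) (sup (y ?k) (inf (x i) (AA x y j ?k n)))"
    using third_props(8)[OF Suc.prems] third_props(7)[OF Suc.prems] by simp
  also have "\<dots> = inf (inf (y i) (y j)) (sup (x i) (inf (y ?k) (AA x y j ?k n)))"
    using L[OF z] by simp
  also have "\<dots> = inf (y j) (inf (y i) (sup (x i) (inf (y ?k) (AA x y j ?k n))))"
    by (simp add: inf_aci)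
  also have "\<dots> = inf (y j) (sup (x i) (inf (inf (y ?k) (y i)) (AA x y j ?k n)))"
    by (subst m1) (simp add: inf_aci)
  also have "\<dots> = inf (y j) (sup (x i) (inf (inf (y ?k) (y i)) (aa x y ?k j n)))"
    using IH by simp
  also have "\<dots> = inf (y j) (inf (y i) (sup (x i) (inf (y ?k) (aa x y ?k j n))))"
    by (subst m1) (simp add: inf_aci)
  also have "\<dots> = inf (inf (y i) (y j)) (aa x y i ?k (Suc n))"
    using third_props(6)[OF Suc.prems] by (simp add: inf_aci)
  finally show ?case .
qed

lemma P6: "okp i j \<Longrightarrow> inf (y i) (aa x y i j (Suc n))
   = inf (y i) (sup (x i) (inf (y j) (AA x y (third i j) j n)))"
proof -
  assume ij: "okp i j"
  let ?k = "third i j"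
  have ji: "okp j i" using ij by (auto simp: okp_def)
  have G: "inf (inf (y j) (y i)) (AA x y ?k j n) = inf (inf (y j) (y i)) (aa x y j ?k n)"
    using P5[OF ji] third_props(5)[OF ij] by simp
  have xi: "x i \<le> y i" using xle[OF ij] by simp
  have m1: "\<And>w. inf (y i) (sup (x i) w) = sup (x i) (inf (y i) w)"
    using modular[OF xi] by (simp add: inf_commute)
  have "inf (y i) (aa x y i j (Suc n)) = sup (x i) (inf (y i) (inf (y j) (aa x y j ?k n)))"
    using m1 by simp
  also have "\<dots> = sup (x i) (inf (inf (y j) (y i)) (aa x y j ?k n))"
    by (simp add: inf_aci)
  also have "\<dots> = sup (x i) (inf (inf (y j) (y i)) (AA x y ?k j n))" using G by simp
  also have "\<dots> = sup (x i) (inf (y i) (inf (y j) (AA x y ?k j n)))"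
    by (simp add: inf_aci)
  also have "\<dots> = inf (y i) (sup (x i) (inf (y j) (AA x y ?k j n)))"
    using m1 by simp
  finally show ?thesis .
qed

end

theorem mainTheorem7:
  fixes x y :: "nat \<Rightarrow> 'a::bounded_lattice_top"
    and i j k :: nat
  assumes modular: "\<And>a b c :: 'a. a \<le> c \<Longrightarrow> sup a (inf b c) = inf (sup a b) c"
    and xy: "\<And>l. l \<in> {1,2,3} \<Longrightarrow> x l \<le> y l"
    and idx: "i \<in> {1,2,3}" "j \<in> {1,2,3}" "k \<in> {1,2,3}" "i \<noteq> j" "j \<noteq> k" "i \<noteq> k"
  shows
    "((\<forall>n. aa x y i j (Suc n) \<le> aa x y i j n) \<and> (\<forall>n. sup (x i) (x j) \<le> aa x y i j n)) \<and>
     (\<forall>n. AA x y i j (Suc n) \<le> AA x y i j n) \<and>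
     (\<forall>n. inf (x k) (AA x y i j n) = inf (x k) (aa x y j i n)) \<and>
     (\<forall>n\<ge>1. AA x y i j n = sup (y i) (inf (x j) (aa x y i k (n - 1)))) \<and>
     (\<forall>n. inf (inf (y i) (y j)) (AA x y k i n) = inf (inf (y i) (y j)) (aa x y i k n)) \<and>
     (\<forall>n. inf (y i) (aa x y i j (Suc n)) = inf (y i) (sup (x i) (inf (y j) (AA x y k j n))))"
proof -
  have ij: "okp i j" using idx by (simp add: okp_def)
  have k: "k = third i j" using idx by (auto simp: third_def)
  note M = modular xy
  have p4: "\<forall>n\<ge>1. AA x y i j n = sup (y i) (inf (x j) (aa x y i k (n - 1)))"
  proof (intro allI impI)
    fix n :: nat assume "n \<ge> 1"
    then obtain m where "n = Suc m" by (cases n) auto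
    then show "AA x y i j n = sup (y i) (inf (x j) (aa x y i k (n - 1)))"
      using P4[OF M ij] k by simp
  qed
  have a1: "\<And>n. aa x y i j (Suc n) \<le> aa x y i j n" by (rule P1a[OF M ij])
  have a2: "\<And>n. sup (x i) (x j) \<le> aa x y i j n" by (rule P1b[OF M ij])
  have a3: "\<And>n. AA x y i j (Suc n) \<le> AA x y i j n" by (rule P2[OF M ij])
  have a4: "\<And>n. inf (x k) (AA x y i j n) = inf (x k) (aa x y j i n)"
    unfolding k by (rule P3[OF M ij])
  have a5: "\<And>n. inf (inf (y i) (y j)) (AA x y k i n) = inf (inf (y i) (y j)) (aa x y i k n)"
    unfolding k by (rule P5[OF M ij])
  have a6: "\<And>n. inf (y i) (aa x y i j (Suc n)) = inf (y i) (sup (x i) (inf (y j) (AA x y k j n)))"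
    unfolding k by (rule P6[OF M ij])
  show ?thesis using a1 a2 a3 a4 p4 a5 a6 by blast
qed

end
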